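(* Let $f\in C([0,1])$. Then for every $\varepsilon>0$ there exists a function $\phi$ generated by a $\sigma$-activated network with width $36$ and depth $5$ such that $|\phi(x)-f(x)|<\varepsilon$ for all $x\in[0,\tfrac{9}{10}]$.
   Context: Let $\sigma_1:\mathbb{R}\to\mathbb{R}$ be the continuous triangular-wave function of period $2$: $\sigma_1(x)=|x|$ for $x\in[-1,1]$, $\sigma_1(x+2)=\sigma_1(x)$. The activation is $\sigma(x)=\sigma_1(x)$ for $x\ge0$ and $\sigma(x)=x/(|x|+1)$ for $x<0$, applied entrywise. A function generated by a $\sigma$-activated network with one input, width $N$ and depth $L$ is a function of the form $\mathcal{L}_{\ell}\circ\sigma\circ\mathcal{L}_{\ell-1}\circ\cdots\circ\sigma\circ\mathcal{L}_0$ with $\ell\le L$ hidden layers, affine maps $\mathcal{L}_i$, $\mathcal{L}_0$ with domain $\mathbb{R}$, $\mathcal{L}_\ell$ with codomain $\mathbb{R}$, and at most $N$ neurons in each hidden layer. *)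

theory Defs
  imports "HOL-Analysis.Analysis"
begin

text \<open>Triangular wave of period 2: equals |x| on [-1,1] and is 2-periodic.\<close>
definition sigma1 :: "real \<Rightarrow> real" where
  "sigma1 x = \<bar>x - 2 * of_int \<lfloor>(x + 1) / 2\<rfloor>\<bar>"

definition sigma :: "real \<Rightarrow> real" where
  "sigma x = (if x \<ge> 0 then sigma1 x else x / (\<bar>x\<bar> + 1))"

definition affine_map :: "(nat \<Rightarrow> nat \<Rightarrow> real) \<Rightarrow> (nat \<Rightarrow> real) \<Rightarrow> nat \<Rightarrow> real list \<Rightarrow> real list" where
  "affine_map W b m v = map (\<lambda>i. (\<Sum>j<length v. W i j * v ! j) + b i) [0..<m]"

fun eval_hidden :: "((nat \<Rightarrow> nat \<Rightarrow> real) \<times> (nat \<Rightarrow> real) \<times> nat) list \<Rightarrow> real list \<Rightarrow> real list" where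
  "eval_hidden [] v = v"
| "eval_hidden ((W, b, m) # ls) v = eval_hidden ls (map sigma (affine_map W b m v))"

definition generated_by_net :: "nat \<Rightarrow> nat \<Rightarrow> (real \<Rightarrow> real) \<Rightarrow> bool" where
  "generated_by_net N L phi \<longleftrightarrow>
     (\<exists>layers w c. length layers \<le> L \<and> (\<forall>(W, b, m) \<in> set layers. m \<le> N) \<and>
        (\<forall>x. phi x = (\<Sum>j<length (eval_hidden layers [x]). w j * eval_hidden layers [x] ! j) + c))"

end

theory Submission imports Defs "HOL-Number_Theory.Number_Theory" begin

lemma sigma1_periodic: "sigma1 (z + 2 * of_int k) = sigma1 z"
proof -
  have "\<lfloor>(z + 2 * of_int k + 1) / 2\<rfloor> = \<lfloor>(z + 1) / 2\<rfloor> + k"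
  proof -
    have "(z + 2 * of_int k + 1) / 2 = (z + 1) / 2 + of_int k" by (simp add: field_simps)
    then show ?thesis by (metis floor_add_int)
  qed
  then show ?thesis unfolding sigma1_def by (simp add: algebra_simps)
qed

lemma sigma1_abs: assumes "-1 \<le> z" "z \<le> 1" shows "sigma1 z = \<bar>z\<bar>"
proof (cases "z = 1")
  case True then show ?thesis by (simp add: sigma1_def)
next
  case False
  then have "\<lfloor>(z + 1) / 2\<rfloor> = 0" using assms by (simp add: floor_eq_iff)
  then show ?thesis by (simp add: sigma1_def)
qed

lemma sigma1_range: "0 \<le> sigma1 z \<and> sigma1 z \<le> 1"
proof -
  have "\<lfloor>(z + 1) / 2\<rfloor> \<le> (z+1)/2" "(z+1)/2 < \<lfloor>(z + 1) / 2\<rfloor> + 1" by linarith+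
  then show ?thesis unfolding sigma1_def by (simp add: field_simps abs_le_iff)
qed

lemma sigma_nonneg: "0 \<le> z \<Longrightarrow> sigma z = sigma1 z" by (simp add: sigma_def)
lemma sigma_id: "0 \<le> z \<Longrightarrow> z \<le> 1 \<Longrightarrow> sigma z = z"
  by (simp add: sigma_def sigma1_abs)
lemma sigma_absd: "-1 \<le> z \<Longrightarrow> z \<le> 1 \<Longrightarrow> sigma (z + 2) = \<bar>z\<bar>"
  using sigma1_periodic[of z 1] by (simp add: sigma_def sigma1_abs)
lemma sigma_neg: "z < 0 \<Longrightarrow> sigma z = z / (1 - z)" by (simp add: sigma_def)
lemma sigma_gt: "sigma z > -1"
proof (cases "z \<ge> 0")
  case True then show ?thesis using sigma1_range[of z] by (simp add: sigma_def)
next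
  case False then show ?thesis by (simp add: sigma_def field_simps)
qed
lemma sigma_range_nonneg: "0 \<le> z \<Longrightarrow> 0 \<le> sigma z \<and> sigma z \<le> 1"
  using sigma1_range by (simp add: sigma_def)

lemma stair:
  fixes y :: real
  assumes "y \<ge> 1/4" "y - \<lfloor>y\<rfloor> \<le> 3/4"
  shows "y + 1/4 - sigma (2*y)/2 - sigma (2*y - 1/2)/2 - sigma (4*y)/4 = \<lfloor>y\<rfloor>"
proof -
  define j where "j = \<lfloor>y\<rfloor>"
  define u where "u = y - j"
  have u0: "0 \<le> u" "u \<le> 3/4" using assms unfolding u_def j_def by auto
  have y: "y = u + j" unfolding u_def by simp
  have A: "sigma (2*y) = sigma1 (2*u)"
    using sigma1_periodic[of "2*u" j] assms by (simp add: sigma_def y)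
  have B: "sigma (2*y - 1/2) = sigma1 (2*u - 1/2)"
    using sigma1_periodic[of "2*u - 1/2" j] assms by (simp add: sigma_def y algebra_simps)
  have C: "sigma (4*y) = sigma1 (4*u)"
    using sigma1_periodic[of "4*u" "2*j"] assms by (simp add: sigma_def y algebra_simps)
  have A2: "sigma1 (2*u) = (if u \<le> 1/2 then 2*u else 2 - 2*u)"
  proof (cases "u \<le> 1/2")
    case True then show ?thesis using u0 by (simp add: sigma1_abs)
  next
    case False then show ?thesis using u0 sigma1_periodic[of "2*u - 2" 1] sigma1_abs[of "2*u-2"] by simp
  qed
  have B2: "sigma1 (2*u - 1/2) = \<bar>2*u - 1/2\<bar>" using u0 by (simp add: sigma1_abs)
  have C2: "sigma1 (4*u) = (if u \<le> 1/4 then 4*u else \<bar>4*u - 2\<bar>)"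
  proof (cases "u \<le> 1/4")
    case True then show ?thesis using u0 by (simp add: sigma1_abs)
  next
    case False then show ?thesis using u0 sigma1_periodic[of "4*u - 2" 1] sigma1_abs[of "4*u-2"] by simp
  qed
  have "1/4 + u - sigma1 (2*u)/2 - sigma1 (2*u - 1/2)/2 - sigma1 (4*u)/4 = 0"
    unfolding A2 B2 C2 using u0 by (auto simp: abs_if)
  then show ?thesis unfolding A B C j_def[symmetric] by (simp add: y)
qed

lemma median3:
  fixes a b c y e :: real
  assumes "(\<bar>a-y\<bar> < e \<and> \<bar>b-y\<bar> < e) \<or> (\<bar>a-y\<bar> < e \<and> \<bar>c-y\<bar> < e) \<or> (\<bar>b-y\<bar> < e \<and> \<bar>c-y\<bar> < e)"
  shows "\<bar>(a+b)/2 + (\<bar>(a + b - \<bar>a-b\<bar>)/2 - c\<bar> - \<bar>(a + b + \<bar>a-b\<bar>)/2 - c\<bar>)/2 - y\<bar> < e"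
proof -
  have med: "(a+b)/2 + (\<bar>(a + b - \<bar>a-b\<bar>)/2 - c\<bar> - \<bar>(a + b + \<bar>a-b\<bar>)/2 - c\<bar>)/2
     = (if c \<le> min a b then min a b else if max a b \<le> c then max a b else c)"
    by (auto simp: abs_if min_def max_def field_simps)
  show ?thesis unfolding med using assms
    by (auto simp: min_def max_def abs_less_iff)
qed

lemma coprime_goedel:
  fixes i j N :: nat
  assumes "1 \<le> i" "i < j" "j \<le> N"
  shows "coprime (1 + i * fact N) (1 + j * fact N)"
proof (rule coprimeI)
  fix d assume d1: "d dvd 1 + i * fact N" and d2: "d dvd 1 + j * fact N"
  have "d dvd j * (1 + i * fact N)" using d1 by (rule dvd_mult)
  moreover have "d dvd i * (1 + j * fact N)" using d2 by (rule dvd_mult)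
  ultimately have "d dvd j * (1 + i * fact N) - i * (1 + j * fact N)"
    by (rule dvd_diff_nat)
  also have "j * (1 + i * fact N) - i * (1 + j * fact N) = j - i"
    by (simp add: algebra_simps)
  finally have "d dvd j - i" .
  moreover have "(j - i) dvd fact N" using assms by (intro dvd_fact) auto
  ultimately have "d dvd fact N" by (rule dvd_trans)
  then have "d dvd i * fact N" by simp
  with d1 have "d dvd (1 + i * fact N) - i * fact N" by (rule dvd_diff_nat)
  then have "d dvd 1" by simp
  then show "is_unit d" by simp
qed

lemma decode:
  fixes J m t r :: nat
  assumes "J \<ge> 1" "m \<ge> 1" "[t = r] (mod (1 + J*m))" "2*r \<le> 1 + J*m"
  shows "sigma (2 * real t + 2 * real t * sigma (- (real m * real J))) = 2 * real r / (1 + real J * real m)"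
proof -
  define q where "q = 1 + J*m"
  have q0: "q > 0" unfolding q_def by simp
  have "r < q" using assms(4) assms(1,2) unfolding q_def by (cases "J*m") auto
  then have rm: "t mod q = r" using assms(3) unfolding q_def[symmetric] cong_def by simp
  have mj: "real m * real J > 0" using assms by simp
  have s: "sigma (- (real m * real J)) = - (real m * real J) / (1 + real m * real J)"
    using sigma_neg[of "- (real m * real J)"] mj by simp
  have arg: "2 * real t + 2 * real t * sigma (- (real m * real J)) = 2 * real t / real q"
    unfolding s q_def using mj by (simp add: field_simps)
  have t: "t = r + q * (t div q)" using mod_div_mult_eq[of t q] rm by (simp add: mult.commute)
  have eq: "2 * real t / real q = 2*real r / real q + 2 * of_int (int (t div q))"
    using q0 by (subst t) (simp add: field_simps)
  have "real (2*r) \<le> real q" using assms(4) unfolding q_def by (simp only: of_nat_le_iff)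
  then have r01: "0 \<le> 2*real r / real q" "2*real r / real q \<le> 1"
    using q0 by (auto simp: field_simps)
  have s1: "sigma1 (2*real r / real q) = 2*real r / real q"
    using sigma1_abs[of "2*real r / real q"] r01 by simp
  have "sigma (2 * real t / real q) = 2*real r / real q"
    unfolding eq using q0 sigma1_periodic[of "2*real r / real q" "int (t div q)"] s1 r01
    by (simp add: sigma_nonneg)
  then show ?thesis using arg unfolding q_def by simp
qed


definition dot :: "real list \<Rightarrow> real list \<Rightarrow> real" where
  "dot ws v = (\<Sum>j<length v. ws ! j * v ! j)"

lemma dot_Nil[simp]: "dot ws [] = 0" by (simp add: dot_def)
lemma dot_Cons[simp]: "dot (w # ws) (x # xs) = w * x + dot ws xs"
  unfolding dot_def by (simp only: length_Cons sum.lessThan_Suc_shift nth_Cons_0 nth_Cons_Suc)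

definition lay :: "(real list \<times> real) list \<Rightarrow> (nat \<Rightarrow> nat \<Rightarrow> real) \<times> (nat \<Rightarrow> real) \<times> nat" where
  "lay L = ((\<lambda>i j. fst (L ! i) ! j), (\<lambda>i. snd (L ! i)), length L)"

lemma eval_lay: "eval_hidden (lay L # ls) v = eval_hidden ls (map (\<lambda>(ws, b). sigma (dot ws v + b)) L)"
proof -
  have "affine_map (\<lambda>i j. fst (L ! i) ! j) (\<lambda>i. snd (L ! i)) (length L) v
        = map (\<lambda>(ws, b). dot ws v + b) L"
    unfolding affine_map_def dot_def
    by (rule nth_equalityI) (auto simp: case_prod_beta)
  then show ?thesis by (simp add: lay_def o_def case_prod_unfold)
qed

lemma lay_m: "(case lay L of (W, b, m) \<Rightarrow> m \<le> N) \<longleftrightarrow> length L \<le> N"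
  by (simp add: lay_def)

definition Yv :: "nat \<Rightarrow> nat \<Rightarrow> real \<Rightarrow> real" where
  "Yv n s x = real n * x + (1 + real s / 3)"

definition Jf :: "nat \<Rightarrow> nat \<Rightarrow> real \<Rightarrow> real" where
  "Jf n s x = real n * sigma x + (1 + real s / 3) + 1/4 - sigma (2 * Yv n s x) / 2
     - sigma (2 * Yv n s x - 1/2) / 2 - sigma (4 * Yv n s x) / 4"

definition Df :: "nat \<Rightarrow> nat \<Rightarrow> nat \<Rightarrow> nat \<Rightarrow> real \<Rightarrow> real" where
  "Df n m t s x = sigma (2 * real t + 2 * real t * sigma (- (real m * Jf n s x)))"

definition L1 :: "nat \<Rightarrow> (real list \<times> real) list" where
  "L1 n = [([2 * real n], 2), ([2 * real n], 2 - 1/2), ([4 * real n], 4),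
           ([2 * real n], 8/3), ([2 * real n], 8/3 - 1/2), ([4 * real n], 16/3),
           ([2 * real n], 10/3), ([2 * real n], 10/3 - 1/2), ([4 * real n], 20/3),
           ([1], 0)]"

definition L2 :: "nat \<Rightarrow> nat \<Rightarrow> (real list \<times> real) list" where
  "L2 n m = [([real m/2, real m/2, real m/4, 0, 0, 0, 0, 0, 0, - (real m * real n)], - (real m * (1 + 1/4))),
             ([0, 0, 0, real m/2, real m/2, real m/4, 0, 0, 0, - (real m * real n)], - (real m * (1 + 1/3 + 1/4))),
             ([0, 0, 0, 0, 0, 0, real m/2, real m/2, real m/4, - (real m * real n)], - (real m * (1 + 2/3 + 1/4)))]"

definition L3 :: "nat \<Rightarrow> nat \<Rightarrow> nat \<Rightarrow> (real list \<times> real) list" where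
  "L3 t0 t1 t2 = [([2 * real t0, 0, 0], 2 * real t0), ([0, 2 * real t1, 0], 2 * real t1),
                  ([0, 0, 2 * real t2], 2 * real t2)]"

definition L4 :: "(real list \<times> real) list" where
  "L4 = [([1, 0, 0], 0), ([0, 1, 0], 0), ([0, 0, 1], 0), ([1, -1, 0], 2)]"

definition L5 :: "(real list \<times> real) list" where
  "L5 = [([1, 0, 0, 0], 0), ([0, 1, 0, 0], 0), ([1/2, 1/2, -1, 1/2], 2), ([1/2, 1/2, -1, -1/2], 2)]"

definition net where
  "net n m t0 t1 t2 = [lay (L1 n), lay (L2 n m), lay (L3 t0 t1 t2), lay L4, lay L5]"

lemma net_eval:
  "eval_hidden (net n m t0 t1 t2) [x] =
    (let d0 = Df n m t0 0 x; d1 = Df n m t1 1 x; d2 = Df n m t2 2 x in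
     [sigma (sigma d0), sigma (sigma d1),
      sigma ((sigma d0 + sigma d1 + sigma (d0 - d1 + 2)) / 2 - sigma d2 + 2),
      sigma ((sigma d0 + sigma d1 - sigma (d0 - d1 + 2)) / 2 - sigma d2 + 2)])"
proof -
  have e1: "map (\<lambda>(ws, b). sigma (dot ws [x] + b)) (L1 n) =
     [sigma (2 * Yv n 0 x), sigma (2 * Yv n 0 x - 1/2), sigma (4 * Yv n 0 x),
      sigma (2 * Yv n 1 x), sigma (2 * Yv n 1 x - 1/2), sigma (4 * Yv n 1 x),
      sigma (2 * Yv n 2 x), sigma (2 * Yv n 2 x - 1/2), sigma (4 * Yv n 2 x), sigma x]"
    by (simp add: L1_def Yv_def algebra_simps)
  have e2: "map (\<lambda>(ws, b). sigma (dot ws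
     [sigma (2 * Yv n 0 x), sigma (2 * Yv n 0 x - 1/2), sigma (4 * Yv n 0 x),
      sigma (2 * Yv n 1 x), sigma (2 * Yv n 1 x - 1/2), sigma (4 * Yv n 1 x),
      sigma (2 * Yv n 2 x), sigma (2 * Yv n 2 x - 1/2), sigma (4 * Yv n 2 x), sigma x] + b)) (L2 n m)
     = [sigma (- (real m * Jf n 0 x)), sigma (- (real m * Jf n 1 x)), sigma (- (real m * Jf n 2 x))]"
    by (simp add: L2_def Jf_def algebra_simps)
  have e3: "map (\<lambda>(ws, b). sigma (dot ws
     [sigma (- (real m * Jf n 0 x)), sigma (- (real m * Jf n 1 x)), sigma (- (real m * Jf n 2 x))] + b))
     (L3 t0 t1 t2) = [Df n m t0 0 x, Df n m t1 1 x, Df n m t2 2 x]"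
    by (simp add: L3_def Df_def algebra_simps)
  show ?thesis
    unfolding net_def eval_lay e1 e2 e3
    apply (simp add: L4_def L5_def Let_def)
    apply (intro conjI arg_cong[where f=sigma])
    apply (simp_all add: field_simps)
    done
qed

definition netfun where
  "netfun n m t0 t1 t2 K B x =
     (\<Sum>j<length (eval_hidden (net n m t0 t1 t2) [x]). [K/2, K/2, -K/2, K/2] ! j * eval_hidden (net n m t0 t1 t2) [x] ! j) + (- B)"

lemma netfun_gen: "generated_by_net 36 5 (netfun n m t0 t1 t2 K B)"
  unfolding generated_by_net_def
  apply (rule exI[of _ "net n m t0 t1 t2"], rule exI[of _ "\<lambda>j. [K/2, K/2, -K/2, K/2] ! j"], rule exI[of _ "- B"])
  by (simp add: net_def lay_def L1_def L2_def L3_def L4_def L5_def netfun_def)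


lemma two_good:
  fixes z :: real
  defines "P \<equiv> \<lambda>y::real. y - \<lfloor>y\<rfloor> \<le> 3/4"
  shows "(P (z + (1 + real 0/3)) \<and> P (z + (1 + real 1/3))) \<or> (P (z + (1 + real 0/3)) \<and> P (z + (1 + real 2/3)))
       \<or> (P (z + (1 + real 1/3)) \<and> P (z + (1 + real 2/3)))"
proof -
  define k where "k = \<lfloor>z\<rfloor>"
  define w where "w = z - k"
  have w: "0 \<le> w" "w < 1" unfolding w_def k_def by linarith+
  have z: "z = k + w" unfolding w_def by simp
  have f0: "\<lfloor>z + 1\<rfloor> = k + 1" unfolding z using w by (simp add: floor_eq_iff)
  have f1: "\<lfloor>z + 4/3\<rfloor> = (if w < 2/3 then k + 1 else k + 2)" unfolding z using w by (simp add: floor_eq_iff)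
  have f2: "\<lfloor>z + 5/3\<rfloor> = (if w < 1/3 then k + 1 else k + 2)" unfolding z using w by (simp add: floor_eq_iff)
  have e: "z + (1 + real 0/3) = z + 1" "z + (1 + real 1/3) = z + 4/3" "z + (1 + real 2/3) = z + 5/3" by simp_all
  show ?thesis unfolding e P_def f0 f1 f2 using w by (simp add: z split: if_splits)
qed

lemma copy_good:
  fixes x :: real and n m t s N :: nat and r :: "nat \<Rightarrow> nat"
  assumes x: "0 \<le> x" "x \<le> 9/10" and n: "n \<ge> 1" and s: "s \<le> 2" and N: "N = n + 2" and m: "m = fact N"
    and fr: "Yv n s x - \<lfloor>Yv n s x\<rfloor> \<le> 3/4"
    and crt: "\<forall>j\<in>{1..N}. [t = r j] (mod (1 + j * m))"
    and rb: "\<forall>j. 2 * r j \<le> 1 + j * m"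
  shows "1 \<le> nat \<lfloor>Yv n s x\<rfloor> \<and> nat \<lfloor>Yv n s x\<rfloor> \<le> N \<and>
         Df n m t s x = 2 * real (r (nat \<lfloor>Yv n s x\<rfloor>)) / (1 + real (nat \<lfloor>Yv n s x\<rfloor>) * real m)"
proof -
  define y where "y = Yv n s x"
  define j where "j = nat \<lfloor>y\<rfloor>"
  have y1: "y \<ge> 1" unfolding y_def Yv_def using x by simp
  have yle: "y < real n + 2"
  proof -
    have "real n * x \<le> real n * (9/10)" using mult_left_mono[of x "9/10" "real n"] x by simp
    moreover have "real s / 3 \<le> 2/3" using s by simp
    moreover have "real n \<ge> 1" using n by simp
    ultimately show ?thesis unfolding y_def Yv_def by linarith
  qed
  have jy: "real j = \<lfloor>y\<rfloor>" unfolding j_def using y1 by simp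
  have j1: "1 \<le> j" unfolding j_def using y1 by linarith
  have jN: "j \<le> N" unfolding j_def N using yle by linarith
  have sx: "sigma x = x" using x by (simp add: sigma_id)
  have J: "Jf n s x = real j"
    using stair[of y] y1 fr unfolding jy y_def Jf_def sx Yv_def by simp
  have m1: "m \<ge> 1" unfolding m by simp
  have "Df n m t s x = 2 * real (r j) / (1 + real j * real m)"
    unfolding Df_def J using decode[of j m t "r j"] j1 jN m1 crt rb by simp
  then show ?thesis using j1 jN unfolding j_def y_def by simp
qed

lemma Df_range: "0 \<le> Df n m t s x \<and> Df n m t s x \<le> 1"
proof -
  have g: "0 < 1 + sigma (- (real m * Jf n s x))" using sigma_gt[of "- (real m * Jf n s x)"] by simp
  have "0 \<le> 2 * real t * (1 + sigma (- (real m * Jf n s x)))" using g by simp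
  then have "0 \<le> 2 * real t + 2 * real t * sigma (- (real m * Jf n s x))" by (simp add: algebra_simps)
  then show ?thesis unfolding Df_def using sigma_range_nonneg by blast
qed

lemma netfun_val:
  "netfun n m t0 t1 t2 K B x =
    (let a = Df n m t0 0 x; b = Df n m t1 1 x; c = Df n m t2 2 x in
     K * ((a+b)/2 + (\<bar>(a + b - \<bar>a-b\<bar>)/2 - c\<bar> - \<bar>(a + b + \<bar>a-b\<bar>)/2 - c\<bar>)/2) - B)"
proof -
  define a where "a = Df n m t0 0 x"
  define b where "b = Df n m t1 1 x"
  define c where "c = Df n m t2 2 x"
  have r: "0 \<le> a" "a \<le> 1" "0 \<le> b" "b \<le> 1" "0 \<le> c" "c \<le> 1"
    unfolding a_def b_def c_def using Df_range by auto
  have sa: "sigma a = a" "sigma b = b" "sigma c = c" using r by (simp_all add: sigma_id)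
  have sab: "sigma (a - b + 2) = \<bar>a - b\<bar>" using r by (simp add: sigma_absd)
  have M: "(a + b + \<bar>a-b\<bar>)/2 = max a b" "(a + b - \<bar>a-b\<bar>)/2 = min a b" by (auto simp: abs_if)
  have s3: "sigma ((a + b + \<bar>a - b\<bar>) / 2 - c + 2) = \<bar>(a + b + \<bar>a - b\<bar>) / 2 - c\<bar>"
    unfolding M using r by (intro sigma_absd) auto
  have s4: "sigma ((a + b - \<bar>a - b\<bar>) / 2 - c + 2) = \<bar>(a + b - \<bar>a - b\<bar>) / 2 - c\<bar>"
    unfolding M using r by (intro sigma_absd) auto
  show ?thesis
    unfolding netfun_def net_eval Let_def a_def[symmetric] b_def[symmetric] c_def[symmetric] sa sab s3 s4
    by (simp add: lessThan_Suc field_simps eval_nat_numeral)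
qed


theorem theorem15:
  fixes f :: "real \<Rightarrow> real" and \<epsilon> :: real
  assumes "continuous_on {0..1} f" and "\<epsilon> > 0"
  shows "\<exists>\<phi>. generated_by_net 36 5 \<phi> \<and> (\<forall>x\<in>{0..9/10}. \<bar>\<phi> x - f x\<bar> < \<epsilon>)"
proof -
  have cpt: "compact {0..1::real}" by simp
  have "bounded (f ` {0..1})" using compact_continuous_image[OF assms(1) cpt] by (rule compact_imp_bounded)
  then obtain a where a: "\<forall>p\<in>{0..1}. \<bar>f p\<bar> \<le> a" unfolding bounded_real by auto
  define Bf where "Bf = max a 0"
  have Bf: "\<forall>p\<in>{0..1}. \<bar>f p\<bar> \<le> Bf" "Bf \<ge> 0" using a unfolding Bf_def by force+
  define K where "K = 2 * Bf + 1"
  have K: "K \<ge> 1" unfolding K_def using Bf by simp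
  define g where "g p = (f p + Bf) / K" for p
  have g01: "0 \<le> g p \<and> g p \<le> 1" if "p \<in> {0..1}" for p
  proof -
    have "\<bar>f p\<bar> \<le> Bf" using Bf that by blast
    then show ?thesis unfolding g_def K_def using K Bf by (auto simp: field_simps abs_le_iff)
  qed
  have uc: "uniformly_continuous_on {0..1} f"
    using compact_uniformly_continuous[OF assms(1) cpt] .
  have e2: "\<epsilon>/2 > 0" using assms(2) by simp
  obtain \<delta> where \<delta>: "\<delta> > 0" "\<forall>q\<in>{0..1}. \<forall>p\<in>{0..1}. dist p q < \<delta> \<longrightarrow> dist (f p) (f q) < \<epsilon>/2"
    using uc e2 unfolding uniformly_continuous_on_def by metis
  define n where "n = nat \<lceil>max (1/\<delta>) (4*K/\<epsilon>)\<rceil> + 1"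
  have nr: "real n > 1/\<delta>" "real n > 4*K/\<epsilon>" unfolding n_def by linarith+
  have n1: "n \<ge> 1" unfolding n_def by simp
  have npos: "real n > 0" using n1 by simp
  have n\<delta>: "1 / real n < \<delta>" using nr(1) \<delta>(1) npos by (simp add: field_simps)
  have ne: "2 / real n < \<epsilon> / (2*K)" using nr(2) K assms(2) npos by (simp add: field_simps)
  define N where "N = n + 2"
  define m :: nat where "m = fact N"
  have mN: "real m \<ge> real n"
  proof -
    have "n \<le> N" unfolding N_def by simp
    also have "N \<le> fact N" by (rule fact_ge_self)
    finally show ?thesis unfolding m_def by (metis of_nat_le_iff)
  qed
  define pt where "pt s j = max 0 ((real j - (1 + real s / 3)) / real n)" for s j :: nat
  define v where "v s j = max 0 (min 1 (g (pt s j)))" for s j :: nat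
  define r where "r s j = nat \<lfloor>v s j * (1 + real j * real m) / 2\<rfloor>" for s j :: nat
  have rfl: "real (r s j) = \<lfloor>v s j * (1 + real j * real m) / 2\<rfloor>" for s j
    unfolding r_def v_def by simp
  have rb: "\<forall>j. 2 * r s j \<le> 1 + j * m" for s
  proof
    fix j
    have "real (r s j) \<le> v s j * (1 + real j * real m) / 2" unfolding rfl by (rule of_int_floor_le)
    also have "\<dots> \<le> (1 + real j * real m) / 2"
    proof -
      have "v s j \<le> 1" unfolding v_def by simp
      then have "v s j * (1 + real j * real m) \<le> 1 * (1 + real j * real m)"
        by (intro mult_right_mono) auto
      then show ?thesis by simp
    qed
    finally have "real (2 * r s j) \<le> real (1 + j * m)" by simp
    then show "2 * r s j \<le> 1 + j * m" by (simp only: of_nat_le_iff)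
  qed
  have cop: "\<forall>i\<in>{1..N}. \<forall>j\<in>{1..N}. i \<noteq> j \<longrightarrow> coprime (1 + i * m) (1 + j * m)"
  proof (intro ballI impI)
    fix i j assume ij: "i \<in> {1..N}" "j \<in> {1..N}" "i \<noteq> j"
    show "coprime (1 + i * m) (1 + j * m)"
    proof (cases "i < j")
      case True then show ?thesis using coprime_goedel[of i j N] ij unfolding m_def by auto
    next
      case False then have "j < i" using ij by simp
      then show ?thesis using coprime_goedel[of j i N] ij unfolding m_def by (auto simp: coprime_commute)
    qed
  qed
  have "\<forall>s. \<exists>t. \<forall>j\<in>{1..N}. [t = r s j] (mod (1 + j * m))"
    using chinese_remainder_nat[of "{1..N}" "\<lambda>j. 1 + j * m"] cop by blast
  then obtain tt where tt: "\<And>s. \<forall>j\<in>{1..N}. [tt s = r s j] (mod (1 + j * m))" by metis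
  define \<phi> where "\<phi> = netfun n m (tt 0) (tt 1) (tt 2) K Bf"
  have good: "\<bar>Df n m (tt s) s x - g x\<bar> < \<epsilon> / K"
    if x: "0 \<le> x" "x \<le> 9/10" and s: "s \<le> 2" and fr: "Yv n s x - \<lfloor>Yv n s x\<rfloor> \<le> 3/4" for s x
  proof -
    define j where "j = nat \<lfloor>Yv n s x\<rfloor>"
    have cg: "1 \<le> j" "j \<le> N" "Df n m (tt s) s x = 2 * real (r s j) / (1 + real j * real m)"
      using copy_good[OF x n1 s N_def m_def fr tt rb] unfolding j_def by auto
    define q where "q = 1 + real j * real m"
    have "1 * real m \<le> real j * real m" using cg(1) by (intro mult_right_mono) auto
    then have qn: "q \<ge> real n" unfolding q_def using mN by simp
    have q0: "q > 0" using qn npos by simp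
    have jfl: "real j = \<lfloor>Yv n s x\<rfloor>" unfolding j_def using cg(1) j_def by linarith
    define pp where "pp = (real j - (1 + real s / 3)) / real n"
    have jle: "real j - (1 + real s / 3) \<le> real n * x" using jfl unfolding Yv_def by linarith
    have jgt: "real j - (1 + real s / 3) > real n * x - 1" using jfl unfolding Yv_def by linarith
    have p1: "pp \<le> x"
      unfolding pp_def using jle npos by (simp add: pos_divide_le_eq mult.commute)
    have "(real n * x - 1) / real n < pp"
      unfolding pp_def using jgt npos by (intro divide_strict_right_mono) auto
    moreover have "(real n * x - 1) / real n = x - 1 / real n" using npos by (simp add: field_simps)
    ultimately have p2: "pp > x - 1 / real n" by simp
    have ptd: "pt s j = max 0 pp" unfolding pt_def pp_def by simp
    have ptx: "\<bar>pt s j - x\<bar> < \<delta>" unfolding ptd using p1 p2 x n\<delta>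
      by (cases "pp \<le> 0") (simp_all add: max_def abs_if)
    have pt01: "pt s j \<in> {0..1}" unfolding ptd using p1 x by (simp add: max_def)
    have x01: "x \<in> {0..1}" using x by simp
    have vg: "v s j = g (pt s j)" unfolding v_def using g01[OF pt01] by simp
    have fdiff: "\<bar>f (pt s j) - f x\<bar> < \<epsilon>/2" using \<delta>(2) pt01 x01 ptx by (auto simp: dist_real_def)
    have gdiff: "\<bar>v s j - g x\<bar> < \<epsilon> / (2*K)"
    proof -
      have "v s j - g x = (f (pt s j) - f x) / K" unfolding vg g_def by (simp add: diff_divide_distrib[symmetric])
      then have "\<bar>v s j - g x\<bar> = \<bar>f (pt s j) - f x\<bar> / K" using K by simp
      also have "\<dots> < (\<epsilon>/2) / K" using fdiff K by (intro divide_strict_right_mono) auto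
      finally show ?thesis by simp
    qed
    have v0: "v s j \<ge> 0" unfolding v_def by simp
    have rl: "real (r s j) \<le> v s j * q / 2" "real (r s j) > v s j * q / 2 - 1"
      unfolding rfl q_def by linarith+
    have d1: "2 * real (r s j) / q \<le> v s j" using rl(1) q0 by (simp add: field_simps)
    have "v s j - 2 / q = (v s j * q - 2) / q" using q0 by (simp add: field_simps)
    moreover have "(v s j * q - 2) / q < 2 * real (r s j) / q"
      using rl(2) q0 by (intro divide_strict_right_mono) auto
    ultimately have d2: "2 * real (r s j) / q > v s j - 2 / q" by simp
    have "2 / q \<le> 2 / real n" using qn npos by (simp add: frac_le)
    then have "\<bar>2 * real (r s j) / q - v s j\<bar> < \<epsilon> / (2*K)" using d1 d2 ne by linarith
    moreover have "\<epsilon> / (2*K) + \<epsilon> / (2*K) = \<epsilon> / K" by (simp add: field_simps)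
    ultimately show ?thesis using gdiff cg(3) unfolding q_def[symmetric] abs_less_iff by linarith
  qed
  show ?thesis
  proof (intro exI conjI ballI)
    show "generated_by_net 36 5 \<phi>" unfolding \<phi>_def by (rule netfun_gen)
  next
    fix x :: real assume xI: "x \<in> {0..9/10}"
    then have x: "0 \<le> x" "x \<le> 9/10" by auto
    define a where "a = Df n m (tt 0) 0 x"
    define b where "b = Df n m (tt 1) 1 x"
    define c where "c = Df n m (tt 2) 2 x"
    have G: "Yv n s x - \<lfloor>Yv n s x\<rfloor> \<le> 3/4 \<Longrightarrow> s \<le> 2 \<Longrightarrow> \<bar>Df n m (tt s) s x - g x\<bar> < \<epsilon> / K" for s
      using good[OF x] by blast
    have Y: "Yv n s x = real n * x + (1 + real s / 3)" for s unfolding Yv_def by simp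
    have D: "(P0 \<and> P1) \<or> (P0 \<and> P2) \<or> (P1 \<and> P2)"
      if "P0 = (Yv n 0 x - \<lfloor>Yv n 0 x\<rfloor> \<le> 3/4)" "P1 = (Yv n 1 x - \<lfloor>Yv n 1 x\<rfloor> \<le> 3/4)"
         "P2 = (Yv n 2 x - \<lfloor>Yv n 2 x\<rfloor> \<le> 3/4)" for P0 P1 P2
      using two_good[of "real n * x"] unfolding Y[symmetric] that by blast
    have Ga: "Yv n 0 x - \<lfloor>Yv n 0 x\<rfloor> \<le> 3/4 \<Longrightarrow> \<bar>a - g x\<bar> < \<epsilon>/K" unfolding a_def using G[of 0] by simp
    have Gb: "Yv n 1 x - \<lfloor>Yv n 1 x\<rfloor> \<le> 3/4 \<Longrightarrow> \<bar>b - g x\<bar> < \<epsilon>/K" unfolding b_def using G[of 1] by simp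
    have Gc: "Yv n 2 x - \<lfloor>Yv n 2 x\<rfloor> \<le> 3/4 \<Longrightarrow> \<bar>c - g x\<bar> < \<epsilon>/K" unfolding c_def using G[of 2] by simp
    have "(\<bar>a - g x\<bar> < \<epsilon>/K \<and> \<bar>b - g x\<bar> < \<epsilon>/K) \<or> (\<bar>a - g x\<bar> < \<epsilon>/K \<and> \<bar>c - g x\<bar> < \<epsilon>/K)
          \<or> (\<bar>b - g x\<bar> < \<epsilon>/K \<and> \<bar>c - g x\<bar> < \<epsilon>/K)"
      using D[OF refl refl refl] Ga Gb Gc by blast
    then have med: "\<bar>(a+b)/2 + (\<bar>(a + b - \<bar>a-b\<bar>)/2 - c\<bar> - \<bar>(a + b + \<bar>a-b\<bar>)/2 - c\<bar>)/2 - g x\<bar> < \<epsilon>/K"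
      by (rule median3)
    have "\<phi> x = K * ((a+b)/2 + (\<bar>(a + b - \<bar>a-b\<bar>)/2 - c\<bar> - \<bar>(a + b + \<bar>a-b\<bar>)/2 - c\<bar>)/2) - Bf"
      unfolding \<phi>_def netfun_val a_def b_def c_def Let_def by simp
    moreover have "f x = K * g x - Bf" unfolding g_def using K by simp
    ultimately have "\<phi> x - f x = K * ((a+b)/2 + (\<bar>(a + b - \<bar>a-b\<bar>)/2 - c\<bar> - \<bar>(a + b + \<bar>a-b\<bar>)/2 - c\<bar>)/2 - g x)"
      by (simp only: right_diff_distrib)
    then have "\<bar>\<phi> x - f x\<bar> = K * \<bar>(a+b)/2 + (\<bar>(a + b - \<bar>a-b\<bar>)/2 - c\<bar> - \<bar>(a + b + \<bar>a-b\<bar>)/2 - c\<bar>)/2 - g x\<bar>"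
      using K by (simp add: abs_mult)
    also have "\<dots> < K * (\<epsilon> / K)" using med K by (intro mult_strict_left_mono) auto
    also have "\<dots> = \<epsilon>" using K by simp
    finally show "\<bar>\<phi> x - f x\<bar> < \<epsilon>" .
  qed
qed

end
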